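(* For $q>1$ and $0<u<1$, the function \[ N_{u,q}(\lambda)=\prod_{r=1}^\infty\Bigl(1-\frac{u}{q^r}\Bigr)\frac{u^{|\lambda|-1}(q^{\lambda'_1}-1)}{\prod_i q^{(\lambda'_i)^2}(\frac1q)_{m_i(\lambda)}}, \] defined on the set of all partitions $\lambda$ of all positive integers, is a probability measure (it is nonnegative and sums to $1$).
   Context: For a partition $\lambda$: $|\lambda|$ is its size, $m_i(\lambda)$ the number of parts equal to $i$, $\lambda'$ the conjugate partition with $\lambda'_i=\sum_{j\ge i}m_j(\lambda)$ (so $\lambda'_1$ is the number of parts). $(\frac1q)_i=\prod_{j=1}^i(1-q^{-j})$, $(\frac1q)_0=1$. *)

theory Defs
  imports "HOL-Analysis.Analysis" "HOL-Library.Multiset"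
begin

definition is_partition :: "nat multiset \<Rightarrow> bool" where
  "is_partition lam \<longleftrightarrow> (\<forall>x\<in>#lam. 0 < x)"

definition psize :: "nat multiset \<Rightarrow> nat" where
  "psize lam = sum_mset lam"

definition mult_part :: "nat multiset \<Rightarrow> nat \<Rightarrow> nat" where
  "mult_part lam i = count lam i"

definition conj_part :: "nat multiset \<Rightarrow> nat \<Rightarrow> nat" where
  "conj_part lam i = size (filter_mset (\<lambda>j. i \<le> j) lam)"

definition qpoch_inv :: "real \<Rightarrow> nat \<Rightarrow> real" where
  "qpoch_inv q i = (\<Prod>j=1..i. 1 - 1 / q ^ j)"

text \<open>The measure N_{u,q}. The product over i ranges over i \<ge> 1; factors with i larger
  than the largest part equal 1, so it suffices to take i \<in> {1..|lam|}.\<close>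
definition N_uq :: "real \<Rightarrow> real \<Rightarrow> nat multiset \<Rightarrow> real" where
  "N_uq u q lam =
     (\<Prod>r. 1 - u / q ^ Suc r) *
     (u ^ (psize lam - 1) * (q ^ conj_part lam 1 - 1) /
      (\<Prod>i=1..psize lam. q ^ ((conj_part lam i)^2) * qpoch_inv q (mult_part lam i)))"

end

theory Submission
  imports Defs
begin


definition dec :: "nat multiset \<Rightarrow> nat multiset" where
  "dec M = image_mset (\<lambda>x. x - 1) (filter_mset (\<lambda>x. 2 \<le> x) M)"
definition inc :: "nat \<Rightarrow> nat multiset \<Rightarrow> nat multiset" where
  "inc k M = image_mset Suc M + replicate_mset (k - size M) 1"

lemma conj_part_empty[simp]: "conj_part {#} i = 0"
  by (simp add: conj_part_def)
lemma conj_part_add: "conj_part (add_mset x M) i = conj_part M i + (if i \<le> x then 1 else 0)"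
  by (simp add: conj_part_def)
lemma conj_part_mono: "conj_part M (Suc i) \<le> conj_part M i"
  by (induction M) (auto simp: conj_part_add)
lemma count_conj: "mult_part M i = conj_part M i - conj_part M (Suc i)"
proof (induction M)
  case empty then show ?case by (simp add: mult_part_def)
next
  case (add x M)
  have "conj_part M (Suc i) \<le> conj_part M i" by (rule conj_part_mono)
  with add show ?case by (auto simp: mult_part_def conj_part_add)
qed
lemma dec_empty[simp]: "dec {#} = {#}" by (simp add: dec_def)
lemma dec_add: "dec (add_mset x M) = (if 2 \<le> x then add_mset (x - 1) (dec M) else dec M)"
  by (simp add: dec_def)
lemma is_partition_add[simp]: "is_partition (add_mset x M) \<longleftrightarrow> 0 < x \<and> is_partition M"
  by (auto simp: is_partition_def)
lemma is_partition_empty[simp]: "is_partition {#}" by (simp add: is_partition_def)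
lemma psize_empty[simp]: "psize {#} = 0" by (simp add: psize_def)
lemma psize_add[simp]: "psize (add_mset x M) = x + psize M" by (simp add: psize_def)

lemma conj_dec: "1 \<le> i \<Longrightarrow> conj_part (dec M) i = conj_part M (Suc i)"
  by (induction M) (auto simp: dec_add conj_part_add)
lemma size_dec: "size (dec M) = conj_part M 2"
  by (induction M) (auto simp: dec_add conj_part_add)
lemma size_dec_le: "size (dec M) \<le> size M"
  by (induction M) (auto simp: dec_add)
lemma conj_1: "is_partition M \<Longrightarrow> conj_part M 1 = size M"
  by (induction M) (auto simp: conj_part_add)
lemma mult_dec: "1 \<le> i \<Longrightarrow> mult_part (dec M) i = mult_part M (Suc i)"
  by (simp add: count_conj conj_dec)
lemma mult_1: "is_partition M \<Longrightarrow> mult_part M 1 = size M - size (dec M)"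
  using conj_1[of M] by (simp add: count_conj size_dec numeral_2_eq_2)
lemma psize_dec: "is_partition M \<Longrightarrow> psize M = size M + psize (dec M)"
  by (induction M) (auto simp: dec_add)
lemma dec_partition: "is_partition (dec M)"
  by (induction M) (auto simp: dec_add)
lemma size_le_psize: "is_partition M \<Longrightarrow> size M \<le> psize M"
  by (induction M) auto
lemma conj_big: "is_partition M \<Longrightarrow> psize M < i \<Longrightarrow> conj_part M i = 0"
  by (induction M) (auto simp: conj_part_add)

lemma inc_Suc1: "size D \<le> s \<Longrightarrow> inc (Suc s) D = add_mset 1 (inc s D)"
  by (simp add: inc_def Suc_diff_le)
lemma inc_add: "inc (Suc s) (add_mset y D) = add_mset (Suc y) (inc s D)"
  by (simp add: inc_def)
lemma inc_dec: "is_partition M \<Longrightarrow> inc (size M) (dec M) = M"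
proof (induction M)
  case empty then show ?case by (simp add: inc_def)
next
  case (add x M)
  have le: "size (dec M) \<le> size M" by (rule size_dec_le)
  show ?case
  proof (cases "2 \<le> x")
    case True
    then show ?thesis using add by (simp add: dec_add inc_add)
  next
    case False
    then have "x = 1" using add by auto
    then show ?thesis using add le by (simp add: dec_add inc_Suc1)
  qed
qed
lemma dec_inc: "is_partition N \<Longrightarrow> dec (inc k N) = N"
proof -
  assume "is_partition N"
  then have "dec (image_mset Suc N) = N" by (induction N) (auto simp: dec_add)
  moreover have "dec (A + replicate_mset n 1) = dec A" for A n
    by (induction n) (auto simp: dec_add)
  ultimately show ?thesis by (simp add: inc_def)
qed
lemma size_inc: "size N \<le> k \<Longrightarrow> size (inc k N) = k"
  by (simp add: inc_def)
lemma inc_partition: "is_partition (inc k N)"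
  by (auto simp: inc_def is_partition_def)



definition fac :: "real \<Rightarrow> nat multiset \<Rightarrow> nat \<Rightarrow> real" where
  "fac q M i = q ^ ((conj_part M i)^2) * qpoch_inv q (mult_part M i)"
definition Dq :: "real \<Rightarrow> nat multiset \<Rightarrow> nat \<Rightarrow> real" where
  "Dq q M n = (\<Prod>i=1..n. fac q M i)"

lemma qpoch_inv_0[simp]: "qpoch_inv q 0 = 1" by (simp add: qpoch_inv_def)

lemma fac_big: "is_partition M \<Longrightarrow> psize M < i \<Longrightarrow> fac q M i = 1"
  by (simp add: fac_def count_conj conj_big)

lemma Dq_ext: assumes "is_partition M" "psize M \<le> n" shows "Dq q M n = Dq q M (psize M)"
proof -
  have "Dq q M (psize M + d) = Dq q M (psize M)" for d
  proof (induction d)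
    case 0 then show ?case by simp
  next
    case (Suc d)
    have "Dq q M (psize M + Suc d) = fac q M (Suc (psize M + d)) * Dq q M (psize M + d)"
      unfolding Dq_def by (simp add: prod.nat_ivl_Suc')
    also have "fac q M (Suc (psize M + d)) = 1" using assms by (intro fac_big) auto
    finally show ?case using Suc by simp
  qed
  from this[of "n - psize M"] assms show ?thesis by simp
qed

lemma fac_dec: "1 \<le> i \<Longrightarrow> fac q M (Suc i) = fac q (dec M) i"
  by (simp add: fac_def conj_dec mult_dec)

lemma Dq_rec:
  assumes "is_partition M" "1 \<le> size M"
  shows "Dq q M (psize M) = q ^ ((size M)^2) * qpoch_inv q (size M - size (dec M)) * Dq q (dec M) (psize (dec M))"
proof -
  have ps: "psize M = size M + psize (dec M)" using assms by (simp add: psize_dec)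
  define m where "m = psize M - 1"
  have m: "psize M = Suc m" "psize (dec M) \<le> m" using assms ps by (auto simp: m_def)
  have "Dq q M (Suc m) = fac q M 1 * (\<Prod>i=Suc 1..Suc m. fac q M i)"
    unfolding Dq_def by (simp add: prod.atLeast_Suc_atMost)
  also have "(\<Prod>i=Suc 1..Suc m. fac q M i) = (\<Prod>i=1..m. fac q M (Suc i))"
    using prod.atLeast_Suc_atMost_Suc_shift[of "fac q M" 1 m] by (simp add: o_def)
  also have "\<dots> = (\<Prod>i=1..m. fac q (dec M) i)"
    by (intro prod.cong) (auto simp: fac_dec)
  also have "\<dots> = Dq q (dec M) (psize (dec M))"
    using Dq_ext[OF dec_partition m(2)] by (simp add: Dq_def)
  also have "fac q M 1 = q ^ ((size M)^2) * qpoch_inv q (size M - size (dec M))"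
    using assms conj_1[of M] mult_1[of M] by (simp add: fac_def)
  finally show ?thesis using m by simp
qed



definition pq :: "real \<Rightarrow> real \<Rightarrow> nat \<Rightarrow> real" where
  "pq q u n = (\<Prod>r<n. 1 - u / q ^ Suc r)"
definition FF :: "real \<Rightarrow> real \<Rightarrow> nat \<Rightarrow> real" where
  "FF q u j = u ^ j / (q ^ (j^2) * pq q 1 j * pq q u j)"
definition hK :: "real \<Rightarrow> real \<Rightarrow> nat \<Rightarrow> real" where
  "hK q u K = (\<Sum>j\<le>K. FF q u j / pq q 1 (K - j))"

lemma pq_0[simp]: "pq q u 0 = 1" by (simp add: pq_def)
lemma pq_Suc: "pq q u (Suc n) = pq q u n * (1 - u / q ^ Suc n)"
  by (simp add: pq_def)
lemma pq_shift: assumes "q > 0" shows "pq q u (Suc n) = (1 - u / q) * pq q (u / q) n"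
  unfolding pq_def prod.lessThan_Suc_shift using assms by (simp add: field_simps)
lemma pq_pos: assumes "q > 1" "0 \<le> u" "u \<le> 1" shows "pq q u n > 0"
  unfolding pq_def
proof (intro prod_pos ballI)
  fix r assume "r \<in> {..<n}"
  have "1 < q ^ Suc r" using assms by (intro one_less_power) auto
  then have "u / q ^ Suc r < 1" using assms by (simp add: divide_less_eq)
  then show "0 < 1 - u / q ^ Suc r" by simp
qed
lemma qpoch_pq: "qpoch_inv q n = pq q 1 n"
  by (induction n) (simp_all add: qpoch_inv_def pq_Suc)

lemma aux_split:
  fixes a b d e x y z :: real
  assumes "x = y * z" "y > 0" "z > 0" "e \<noteq> 0" "a * (1 - 1 / y) = d / (y * e) * b"
  shows "a * (1 - 1 / x) = a * (1 - 1 / z) + d / (x * e) * b"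
proof -
  have "a * (1 - 1 / x) - a * (1 - 1 / z) = (1 / z) * (a * (1 - 1 / y))"
    using assms(1-3) by (simp add: field_simps)
  also have "\<dots> = d / (x * e) * b" unfolding assms(5) assms(1) using assms(2-4) by (simp add: field_simps)
  finally show ?thesis by simp
qed

lemma aux_key:
  fixes x1 x2 x3 x4 x5 x6 x7 x8 x9 :: real
  assumes "x3 \<noteq> 0" "x4 \<noteq> 0" "x5 \<noteq> 0" "x6 \<noteq> 0" "x7 \<noteq> 0" "x8 \<noteq> 0" "x9 \<noteq> 0"
  shows "(x1*x2)/(x3*x4*(x5*x4)*(x6*x8)*(x9*x7)) * x8 = x1/((x5*x4)*x9) * ((x2/x4)/(x3*x6*x7))"
  using assms by (simp add: field_simps)

lemma aux_d1: fixes x Q s P1 P2 :: real shows "x / (Q * s) / (P1 * P2) = x / Q / (P1 * (s * P2))"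
  by (simp add: divide_divide_eq_left mult_ac)
lemma aux_d2: fixes P1 P3 d :: real assumes "d \<noteq> 0" shows "1 / (P1 * P3) = d / (P1 * (P3 * d))"
proof -
  have "d / (P1 * (P3 * d)) = (1 * d) / ((P1 * P3) * d)" by (simp only: mult.assoc mult_1)
  also have "\<dots> = 1 / (P1 * P3)" using assms by (rule nonzero_mult_divide_mult_cancel_right)
  finally show ?thesis by simp
qed
lemma aux_d3: fixes h r P1 P2 :: real assumes "h * r = 1 / (P1 * P2)" "r \<noteq> 0" shows "h = 1 / (P1 * r * P2)"
proof -
  have "h = (h * r) / r" using assms(2) by simp
  also have "\<dots> = 1 / (P1 * P2) / r" using assms(1) by simp
  finally show ?thesis by (simp add: divide_divide_eq_left mult_ac)
qed

lemma FF_key: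
  assumes "q > 1" "0 \<le> u" "u \<le> 1"
  shows "FF q u (Suc i) * (1 - 1 / q ^ Suc i) = u / (q ^ Suc i * (1 - u / q)) * FF q (u / q) i"
proof -
  have q0: "q > 0" using assms by simp
  have p1: "pq q 1 i > 0" using pq_pos[of q 1 i] assms by simp
  have p2: "pq q (u/q) i > 0" using pq_pos[of q "u/q" i] assms by (simp add: divide_le_eq)
  have "1 < q ^ Suc i" using assms by (intro one_less_power) auto
  then have a: "1 - 1 / q ^ Suc i > 0" by simp
  have b: "1 - u / q > 0" using assms by (simp add: divide_less_eq)
  have "(Suc i)^2 = i^2 + i + Suc i" by (simp add: power2_eq_square)
  then have e: "q ^ ((Suc i)^2) = q ^ (i^2) * q ^ i * q ^ Suc i"
    by (simp only: power_add)
  have l: "FF q u (Suc i) = (u*u^i)/(q^(i^2)*q^i*(q*q^i)*(pq q 1 i*(1 - 1/(q*q^i)))*((1-u/q)*pq q (u/q) i))"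
    unfolding FF_def pq_shift[OF q0, of u] pq_Suc[of q 1 i] e by simp
  have r: "FF q (u/q) i = (u^i/q^i)/(q^(i^2)*pq q 1 i*pq q (u/q) i)"
    unfolding FF_def by (simp add: power_divide)
  show ?thesis unfolding l r power_Suc
    by (rule aux_key) (use q0 p1 p2 a b in auto)
qed

lemma hK_closed:
  assumes "q > 1" "0 \<le> u" "u \<le> 1"
  shows "hK q u K = 1 / (pq q 1 K * pq q u K)"
  using assms(2,3)
proof (induction K arbitrary: u)
  case 0 then show ?case by (simp add: hK_def FF_def)
next
  case (Suc K)
  have q0: "q > 0" using assms by simp
  have uq: "0 \<le> u / q" "u / q \<le> 1" using Suc.prems assms by (auto simp: divide_le_eq)
  define c where "c = u / (q ^ Suc K * (1 - u / q))"
  have split: "FF q u j * (1 - 1 / q ^ Suc K) / pq q 1 (Suc K - j) =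
      FF q u j * (1 - 1 / q ^ (Suc K - j)) / pq q 1 (Suc K - j)
      + (if j = 0 then 0 else c * FF q (u/q) (j - 1) / pq q 1 (K - (j - 1)))"
    if j: "j \<le> Suc K" for j
  proof (cases j)
    case 0 then show ?thesis by (simp add: field_simps)
  next
    case (Suc i)
    have "q ^ Suc K = q ^ Suc i * q ^ (Suc K - j)" using j Suc
      by (simp add: power_add[symmetric])
    moreover have "FF q u (Suc i) * (1 - 1 / q ^ Suc i) = u / (q ^ Suc i * (1 - u / q)) * FF q (u / q) i"
      using FF_key[OF assms(1) Suc.prems] .
    moreover have "1 - u / q \<noteq> 0" using assms Suc.prems by (simp add: divide_less_eq)
    ultimately have "FF q u (Suc i) * (1 - 1 / q ^ Suc K) = FF q u (Suc i) * (1 - 1 / q ^ (Suc K - j)) + c * FF q (u / q) i"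
      unfolding c_def using q0 by (intro aux_split) auto
    moreover have "Suc K - j = K - i" using Suc j by simp
    ultimately show ?thesis using Suc by (simp add: add_divide_distrib)
  qed
  have A: "(\<Sum>j\<le>Suc K. FF q u j * (1 - 1 / q ^ (Suc K - j)) / pq q 1 (Suc K - j)) = hK q u K"
  proof -
    have "(\<Sum>j\<le>Suc K. FF q u j * (1 - 1 / q ^ (Suc K - j)) / pq q 1 (Suc K - j))
        = (\<Sum>j\<le>K. FF q u j * (1 - 1 / q ^ (Suc K - j)) / pq q 1 (Suc K - j))"
      by (simp add: sum.atMost_Suc)
    also have "\<dots> = (\<Sum>j\<le>K. FF q u j / pq q 1 (K - j))"
    proof (intro sum.cong refl)
      fix j assume "j \<in> {..K}"
      then have "Suc K - j = Suc (K - j)" by auto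
      moreover have "1 < q ^ Suc (K - j)" using assms by (intro one_less_power) auto
      then have "1 - 1 / q ^ Suc (K - j) > 0" by simp
      then have "(1 - 1 / q ^ Suc (K - j)) \<noteq> 0" by linarith
      ultimately show "FF q u j * (1 - 1 / q ^ (Suc K - j)) / pq q 1 (Suc K - j) = FF q u j / pq q 1 (K - j)"
        by (metis pq_Suc nonzero_mult_divide_mult_cancel_right)
    qed
    finally show ?thesis by (simp add: hK_def)
  qed
  have B: "(\<Sum>j\<le>Suc K. (if j = 0 then 0 else c * FF q (u/q) (j - 1) / pq q 1 (K - (j - 1)))) = c * hK q (u/q) K"
    unfolding sum.atMost_Suc_shift by (simp add: hK_def sum_distrib_left)
  have "hK q u (Suc K) * (1 - 1 / q ^ Suc K) = (\<Sum>j\<le>Suc K. FF q u j * (1 - 1 / q ^ Suc K) / pq q 1 (Suc K - j))"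
    unfolding hK_def sum_distrib_right by (simp add: mult.commute mult.left_commute divide_simps del: sum.atMost_Suc)
  also have "\<dots> = hK q u K + c * hK q (u/q) K"
    using split A B by (simp add: sum.distrib)
  also have "\<dots> = 1 / (pq q 1 K * pq q u K) + c / (pq q 1 K * pq q (u/q) K)"
    using Suc.IH[OF Suc.prems] Suc.IH[OF uq] by simp
  also have "\<dots> = 1 / (pq q 1 K * pq q u (Suc K))"
  proof -
    have p1: "pq q 1 K > 0" using pq_pos[of q 1 K] assms by simp
    have p2: "pq q (u/q) K > 0" using pq_pos[of q "u/q" K] assms uq by simp
    have p3: "pq q u K > 0" using pq_pos[of q u K] assms Suc.prems by simp
    have b: "1 - u / q > 0" using assms Suc.prems by (simp add: divide_less_eq)
    have "1 < q ^ Suc K" using assms by (intro one_less_power) auto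
    then have "u / q ^ Suc K < 1" using Suc.prems by (simp add: divide_less_eq)
    then have d: "1 - u / q ^ Suc K > 0" by linarith
    have e1: "pq q u (Suc K) = pq q u K * (1 - u / q ^ Suc K)" by (rule pq_Suc)
    have e2: "pq q u (Suc K) = (1 - u / q) * pq q (u / q) K" by (rule pq_shift[OF q0])
    have "c / (pq q 1 K * pq q (u/q) K) = u / q ^ Suc K / (pq q 1 K * pq q u (Suc K))"
      unfolding c_def e2 by (rule aux_d1)
    moreover have "1 / (pq q 1 K * pq q u K) = (1 - u / q ^ Suc K) / (pq q 1 K * pq q u (Suc K))"
      unfolding e1 by (rule aux_d2) (use d in linarith)
    ultimately show ?thesis by (metis add_divide_distrib diff_add_cancel)
  qed
  finally have "hK q u (Suc K) * (1 - 1 / q ^ Suc K) = 1 / (pq q 1 K * pq q u (Suc K))" .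
  moreover have "1 < q ^ Suc K" using assms by (intro one_less_power) auto
  then have "1 - 1 / q ^ Suc K \<noteq> 0" by simp
  ultimately show ?case unfolding pq_Suc[of q 1 K] by (rule aux_d3)
qed



definition Cq :: "real \<Rightarrow> real \<Rightarrow> real" where
  "Cq q u = (\<Prod>r. 1 - u / q ^ Suc r)"

lemma fac_lt1: fixes q u :: real assumes "q > 1" "0 \<le> u" "u \<le> 1" shows "u / q ^ Suc r < 1"
proof -
  have "1 < q ^ Suc r" using assms by (intro one_less_power) auto
  then show ?thesis using assms by (simp add: divide_less_eq)
qed

lemma cprod: fixes q u :: real assumes "q > 1" "0 \<le> u" "u \<le> 1"
  shows "convergent_prod (\<lambda>r. 1 - u / q ^ Suc r)"
proof -
  have "summable (\<lambda>r. \<bar>- (u / q ^ Suc r)\<bar>)"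
  proof -
    have "summable (\<lambda>r. (u / q) * (1 / q) ^ r)"
      using assms by (intro summable_mult summable_geometric) auto
    moreover have "\<bar>- (u / q ^ Suc r)\<bar> = (u / q) * (1 / q) ^ r" for r
      using assms by (simp add: power_divide)
    ultimately show ?thesis by simp
  qed
  moreover have "- (u / q ^ Suc r) \<noteq> -1" for r using fac_lt1[OF assms, of r] by linarith
  ultimately have "convergent_prod (\<lambda>r. 1 + - (u / q ^ Suc r))"
    by (rule summable_imp_convergent_prod_real)
  then show ?thesis by simp
qed

lemma pq_lim: assumes "q > 1" "0 \<le> u" "u \<le> 1" shows "pq q u \<longlonglongrightarrow> Cq q u"
proof -
  have "(\<lambda>n. \<Prod>i\<le>n. 1 - u / q ^ Suc i) \<longlonglongrightarrow> Cq q u"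
    unfolding Cq_def by (rule convergent_prod_LIMSEQ[OF cprod[OF assms]])
  moreover have "(\<Prod>i\<le>n. 1 - u / q ^ Suc i) = pq q u (Suc n)" for n
    by (simp add: pq_def lessThan_Suc_atMost)
  ultimately have "(\<lambda>n. pq q u (Suc n)) \<longlonglongrightarrow> Cq q u" by simp
  then show ?thesis by (rule LIMSEQ_imp_Suc)
qed

lemma Cq_pos: assumes "q > 1" "0 \<le> u" "u \<le> 1" shows "Cq q u > 0"
  unfolding Cq_def
  by (rule less_0_prodinf[OF cprod[OF assms]]) (use fac_lt1[OF assms] in auto)

lemma pq_mono: assumes "q > 1" "0 \<le> u" "u \<le> 1" shows "pq q u (m + d) \<le> pq q u m"
proof (induction d)
  case 0 then show ?case by simp
next
  case (Suc d)
  have "pq q u (m + Suc d) = pq q u (m + d) * (1 - u / q ^ Suc (m + d))"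
    by (simp add: pq_Suc)
  also have "\<dots> \<le> pq q u (m + d)"
  proof -
    have "0 < pq q u (m + d)" using pq_pos[OF assms] .
    moreover have "1 - u / q ^ Suc (m + d) \<le> 1" using assms by simp
    ultimately show ?thesis by (simp add: mult_left_le)
  qed
  finally show ?case using Suc by simp
qed

lemma Cq_le_pq: assumes "q > 1" "0 \<le> u" "u \<le> 1" shows "Cq q u \<le> pq q u n"
proof -
  have "pq q u \<longlonglongrightarrow> Cq q u" by (rule pq_lim[OF assms])
  moreover have "\<forall>m\<ge>n. pq q u m \<le> pq q u n"
    using pq_mono[OF assms, of n] by (metis le_add_diff_inverse)
  ultimately show ?thesis by (intro LIMSEQ_le_const2) auto
qed

lemma pq1_pos: "q > 1 \<Longrightarrow> pq q 1 n > 0" using pq_pos[of q 1 n] by simp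

lemma FF_nonneg: assumes "q > 1" "0 \<le> u" "u \<le> 1" shows "FF q u j \<ge> 0"
proof -
  have "0 < q ^ (j^2) * pq q 1 j * pq q u j"
    using pq_pos[OF assms] pq1_pos[OF assms(1)] assms by (intro mult_pos_pos) auto
  then show ?thesis unfolding FF_def using assms by simp
qed

lemma FF_id: assumes "q > 1" "0 \<le> u" "u \<le> 1"
  shows "(\<Sum>j\<le>K. FF q u j * (pq q 1 K / pq q 1 (K - j))) = 1 / pq q u K"
proof -
  have p1: "pq q 1 K > 0" using pq_pos[of q 1 K] assms by simp
  have "(\<Sum>j\<le>K. FF q u j * (pq q 1 K / pq q 1 (K - j))) = pq q 1 K * hK q u K"
    unfolding hK_def sum_distrib_left by (intro sum.cong) auto
  also have "\<dots> = 1 / pq q u K" using hK_closed[OF assms] p1 by simp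
  finally show ?thesis .
qed

lemma FF_lower: assumes "q > 1" "0 \<le> u" "u \<le> 1"
  shows "1 / pq q u K \<le> (\<Sum>j\<le>K. FF q u j)"
proof -
  have "(\<Sum>j\<le>K. FF q u j * (pq q 1 K / pq q 1 (K - j))) \<le> (\<Sum>j\<le>K. FF q u j)"
  proof (intro sum_mono)
    fix j assume "j \<in> {..K}"
    then have "pq q 1 K \<le> pq q 1 (K - j)" using pq_mono[of q 1 "K - j" j] assms by simp
    moreover have "pq q 1 (K - j) > 0" using pq_pos[of q 1] assms by simp
    ultimately have "pq q 1 K / pq q 1 (K - j) \<le> 1" by simp
    then show "FF q u j * (pq q 1 K / pq q 1 (K - j)) \<le> FF q u j"
      using FF_nonneg[OF assms, of j] by (rule mult_left_le)
  qed
  then show ?thesis using FF_id[OF assms] by simp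
qed

lemma FF_upper: assumes "q > 1" "0 \<le> u" "u \<le> 1"
  shows "(\<Sum>j\<le>J. FF q u j) \<le> 1 / Cq q u"
proof -
  have C1: "Cq q 1 > 0" using Cq_pos[of q 1] assms by simp
  have lim: "(\<lambda>n. \<Sum>j\<le>J. FF q u j * (pq q 1 (n + J) / pq q 1 (n + J - j))) \<longlonglongrightarrow> (\<Sum>j\<le>J. FF q u j * (Cq q 1 / Cq q 1))"
  proof (intro tendsto_sum tendsto_mult tendsto_const tendsto_divide)
    fix j assume j: "j \<in> {..J}"
    have L: "pq q 1 \<longlonglongrightarrow> Cq q 1" using pq_lim[of q 1] assms by simp
    show "(\<lambda>n. pq q 1 (n + J)) \<longlonglongrightarrow> Cq q 1" by (rule LIMSEQ_ignore_initial_segment[OF L])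
    have "(\<lambda>n. pq q 1 (n + (J - j))) \<longlonglongrightarrow> Cq q 1" by (rule LIMSEQ_ignore_initial_segment[OF L])
    moreover have "n + J - j = n + (J - j)" for n using j by simp
    ultimately show "(\<lambda>n. pq q 1 (n + J - j)) \<longlonglongrightarrow> Cq q 1" by simp
    show "Cq q 1 \<noteq> 0" using C1 by simp
  qed
  have "(\<Sum>j\<le>J. FF q u j * (Cq q 1 / Cq q 1)) \<le> 1 / Cq q u"
  proof (rule LIMSEQ_le_const2[OF lim], intro exI allI impI)
    fix n :: nat
    have "(\<Sum>j\<le>J. FF q u j * (pq q 1 (n + J) / pq q 1 (n + J - j)))
        \<le> (\<Sum>j\<le>n + J. FF q u j * (pq q 1 (n + J) / pq q 1 (n + J - j)))"
    proof (rule sum_mono2)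
      show "\<And>b. b \<in> {..n + J} - {..J} \<Longrightarrow> 0 \<le> FF q u b * (pq q 1 (n + J) / pq q 1 (n + J - b))"
        using FF_nonneg[OF assms] pq1_pos[OF assms(1)]
        by (intro mult_nonneg_nonneg divide_nonneg_pos) (auto intro: less_imp_le)
    qed auto
    also have "\<dots> = 1 / pq q u (n + J)" by (rule FF_id[OF assms])
    also have "\<dots> \<le> 1 / Cq q u"
      using Cq_le_pq[OF assms] Cq_pos[OF assms] by (simp add: frac_le)
    finally show "(\<Sum>j\<le>J. FF q u j * (pq q 1 (n + J) / pq q 1 (n + J - j))) \<le> 1 / Cq q u" .
  qed
  then show ?thesis using C1 by simp
qed

lemma FF_sums: assumes "q > 1" "0 \<le> u" "u \<le> 1"
  shows "FF q u sums (1 / Cq q u)"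
proof -
  have nn: "\<And>n. 0 \<le> FF q u n" using FF_nonneg[OF assms] .
  have bd: "sum (FF q u) {..<n} \<le> 1 / Cq q u" for n
  proof -
    have "sum (FF q u) {..<n} \<le> sum (FF q u) {..n}"
      by (rule sum_mono2) (use nn in auto)
    then show ?thesis using FF_upper[OF assms, of n] by simp
  qed
  have sm: "summable (FF q u)" by (rule summableI_nonneg_bounded[OF nn bd])
  have le: "suminf (FF q u) \<le> 1 / Cq q u" by (rule suminf_le_const[OF sm bd])
  have ge: "1 / Cq q u \<le> suminf (FF q u)"
  proof (rule LIMSEQ_le_const2)
    show "(\<lambda>K. 1 / pq q u K) \<longlonglongrightarrow> 1 / Cq q u"
      using pq_lim[OF assms] Cq_pos[OF assms] by (intro tendsto_divide tendsto_const) auto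
    show "\<exists>N. \<forall>n\<ge>N. 1 / pq q u n \<le> suminf (FF q u)"
    proof (intro exI allI impI)
      fix n :: nat
      have "1 / pq q u n \<le> sum (FF q u) {..n}" by (rule FF_lower[OF assms])
      also have "\<dots> \<le> suminf (FF q u)" by (rule sum_le_suminf[OF sm]) (use nn in auto)
      finally show "1 / pq q u n \<le> suminf (FF q u)" .
    qed
  qed
  from le ge have "suminf (FF q u) = 1 / Cq q u" by simp
  with sm show ?thesis using summable_sums by fastforce
qed



lemma aux_step:
  fixes x u A R Q P1 P2 a b :: real
  assumes "A \<noteq> 0" "R \<noteq> 0" "Q \<noteq> 0" "P1 \<noteq> 0" "P2 \<noteq> 0" "a \<noteq> 0" "b \<noteq> 0"
    "1 - 1/Q = a/Q" "1 - u/Q = b/Q"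
  shows "(u*x)/(A*R*Q*(P1*(1-1/Q))*(P2*(1-u/Q))) = x/(A*P1*P2) * (u*Q/(R*a*b))"
  unfolding assms(8,9) using assms(1-7) by (simp add: field_simps)

lemma aux_tele:
  fixes F G u R Q a b :: real
  assumes "R \<noteq> 0" "Q \<noteq> 0" "a \<noteq> 0" "b \<noteq> 0" "a = Q - 1" "b = Q - u" "F = G * (u*Q/(R*a*b))"
  shows "F * (Q - 1) = u * F + u * (G / R - F / Q)"
proof -
  have h1: "Q - 1 - u + u / Q = a * b / Q" unfolding assms(5,6) using assms(2) by (simp add: field_simps)
  have h2: "F * (a * b / Q) = u * G / R" unfolding assms(7) using assms(1-4) by (simp add: field_simps)
  have "F * (Q - 1) - (u * F + u * (G / R - F / Q)) = F * (Q - 1 - u + u / Q) - u * G / R"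
    by (simp add: algebra_simps)
  also have "\<dots> = 0" unfolding h1 h2 by simp
  finally show ?thesis by simp
qed

lemma FF_step:
  assumes "q > 1" "0 \<le> u" "u < 1"
  shows "FF q u (Suc m) = FF q u m * (u * q ^ Suc m / (q ^ m * (q ^ Suc m - 1) * (q ^ Suc m - u)))"
proof -
  have Q: "q ^ Suc m > 1" using assms by (intro one_less_power) auto
  have "(Suc m)^2 = m^2 + m + Suc m" by (simp add: power2_eq_square)
  then have e: "q ^ ((Suc m)^2) = q ^ (m^2) * q ^ m * q ^ Suc m" by (simp only: power_add)
  have "FF q u (Suc m) = (u * u ^ m) / (q ^ (m^2) * q ^ m * q ^ Suc m * (pq q 1 m * (1 - 1 / q ^ Suc m)) * (pq q u m * (1 - u / q ^ Suc m)))"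
    unfolding FF_def e pq_Suc by simp
  also have "\<dots> = u ^ m / (q ^ (m^2) * pq q 1 m * pq q u m) * (u * q ^ Suc m / (q ^ m * (q ^ Suc m - 1) * (q ^ Suc m - u)))"
    by (rule aux_step) (use assms Q pq1_pos[of q m] pq_pos[of q u m] in \<open>auto simp: field_simps\<close>)
  finally show ?thesis unfolding FF_def .
qed

lemma gg_sums:
  assumes "q > 1" "0 \<le> u" "u < 1"
  shows "(\<lambda>k. FF q u k * (q ^ k - 1)) sums (u * (1 / Cq q u))"
proof -
  have a3: "u \<le> 1" using assms by simp
  define e where "e m = FF q u m / q ^ m" for m
  have step: "FF q u (Suc m) * (q ^ Suc m - 1) = u * FF q u (Suc m) + u * (e m - e (Suc m))" for m
  proof -
    have Q: "q ^ Suc m > 1" using assms by (intro one_less_power) auto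
    show ?thesis unfolding e_def
      by (rule aux_tele[OF _ _ _ _ refl refl FF_step[OF assms]]) (use assms Q in auto)
  qed
  have s1: "(\<lambda>m. FF q u (Suc m)) sums (1 / Cq q u - 1)"
    using FF_sums[OF assms(1,2) a3] by (subst sums_Suc_iff) (simp add: FF_def)
  have "e \<longlonglongrightarrow> 0 * 0"
  proof -
    have "FF q u \<longlonglongrightarrow> 0"
      using FF_sums[OF assms(1,2) a3] by (intro summable_LIMSEQ_zero) (auto simp: sums_iff)
    moreover have "(\<lambda>m. (1 / q) ^ m) \<longlonglongrightarrow> 0" using assms by (intro LIMSEQ_power_zero) auto
    ultimately have "(\<lambda>m. FF q u m * (1 / q) ^ m) \<longlonglongrightarrow> 0 * 0" by (rule tendsto_mult)
    then show ?thesis unfolding e_def by (simp add: power_divide)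
  qed
  then have s2: "(\<lambda>m. e m - e (Suc m)) sums (e 0 - 0)" by (intro telescope_sums') simp
  have "(\<lambda>m. u * FF q u (Suc m) + u * (e m - e (Suc m))) sums (u * (1 / Cq q u - 1) + u * (e 0 - 0))"
    by (intro sums_add sums_mult s1 s2)
  moreover have "e 0 = 1" by (simp add: e_def FF_def)
  ultimately have "(\<lambda>m. u * FF q u (Suc m) + u * (e m - e (Suc m))) sums (u * (1 / Cq q u))"
    by (simp add: algebra_simps)
  moreover have "(\<lambda>m. FF q u (Suc m) * (q ^ Suc m - 1)) = (\<lambda>m. u * FF q u (Suc m) + u * (e m - e (Suc m)))"
    using step by (rule ext)
  ultimately have "(\<lambda>m. FF q u (Suc m) * (q ^ Suc m - 1)) sums (u * (1 / Cq q u))" by simp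
  then show ?thesis by (subst (asm) sums_Suc_iff) simp
qed



definition wt :: "real \<Rightarrow> real \<Rightarrow> nat multiset \<Rightarrow> real" where
  "wt q u M = u ^ psize M / Dq q M (psize M)"

lemma Dq_pos: assumes "q > 1" shows "Dq q M n > 0"
  unfolding Dq_def fac_def qpoch_pq
  using assms pq1_pos[OF assms] by (intro prod_pos ballI mult_pos_pos) auto

lemma wt_nonneg: "q > 1 \<Longrightarrow> 0 \<le> u \<Longrightarrow> wt q u M \<ge> 0"
  unfolding wt_def using Dq_pos[of q M] by (intro divide_nonneg_pos) auto

lemma wt_empty[simp]: "wt q u {#} = 1"
  by (simp add: wt_def Dq_def)

lemma wt_rec:
  assumes "is_partition M" "size M = k" "1 \<le> k"
  shows "wt q u M = u ^ k / (q ^ (k^2) * pq q 1 (k - size (dec M))) * wt q u (dec M)"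
proof -
  have "psize M = k + psize (dec M)" using psize_dec[OF assms(1)] assms by simp
  then have P: "u ^ psize M = u ^ k * u ^ psize (dec M)" by (simp add: power_add)
  have D: "Dq q M (psize M) = q ^ (k^2) * pq q 1 (k - size (dec M)) * Dq q (dec M) (psize (dec M))"
    using Dq_rec[OF assms(1), of q] assms by (simp add: qpoch_pq)
  show ?thesis unfolding wt_def P D by (simp only: times_divide_times_eq)
qed

lemma wt_inc:
  assumes "is_partition N" "size N \<le> k" "1 \<le> k"
  shows "wt q u (inc k N) = u ^ k / (q ^ (k^2) * pq q 1 (k - size N)) * wt q u N"
  using wt_rec[OF inc_partition size_inc[OF assms(2)] assms(3)] dec_inc[OF assms(1)] by simp

lemma mem_le_psize: "x \<in># M \<Longrightarrow> x \<le> psize M"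
  by (induction M) auto

lemma finite_bounded: "finite {M. is_partition M \<and> psize M \<le> n}"
proof -
  have "{M. is_partition M \<and> psize M \<le> n} \<subseteq> mset ` {xs. set xs \<subseteq> {0..n} \<and> length xs \<le> n}"
  proof
    fix M assume M: "M \<in> {M. is_partition M \<and> psize M \<le> n}"
    obtain xs where xs: "mset xs = M" using ex_mset by blast
    have "set xs \<subseteq> {0..n}"
    proof
      fix x assume "x \<in> set xs"
      then have "x \<in># M" using xs by (metis set_mset_mset)
      then have "x \<le> psize M" by (rule mem_le_psize)
      then show "x \<in> {0..n}" using M by simp
    qed
    moreover have "length xs \<le> n"
    proof -
      have "length xs = size M" using xs by auto
      also have "\<dots> \<le> psize M" using M by (simp add: size_le_psize)
      also have "\<dots> \<le> n" using M by simp
      finally show ?thesis .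
    qed
    ultimately have "xs \<in> {xs. set xs \<subseteq> {0..n} \<and> length xs \<le> n}" by simp
    then show "M \<in> mset ` {xs. set xs \<subseteq> {0..n} \<and> length xs \<le> n}" using xs[symmetric] by (rule rev_image_eqI)
  qed
  moreover have "finite (mset ` {xs. set xs \<subseteq> {0..n} \<and> length xs \<le> n})"
    by (intro finite_imageI finite_lists_length_le) (rule finite_atLeastAtMost)
  ultimately show ?thesis by (rule finite_subset)
qed

lemma size0_empty: "size M = 0 \<Longrightarrow> M = {#}" by simp

lemma aK_hK: assumes "q > 1" "0 \<le> u" "u \<le> 1"
  shows "u ^ k / q ^ (k^2) * hK q u k = FF q u k"
  unfolding hK_closed[OF assms] FF_def by (simp add: field_simps)

lemma bound:
  assumes "q > 1" "0 \<le> u" "u \<le> 1"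
  shows "sum (wt q u) {M. is_partition M \<and> size M = k \<and> psize M \<le> N} \<le> FF q u k"
proof (induction N arbitrary: k rule: less_induct)
  case (less N)
  define A where "A = {M. is_partition M \<and> size M = k \<and> psize M \<le> N}"
  have fA: "finite A" unfolding A_def by (rule finite_subset[OF _ finite_bounded[of N]]) auto
  show ?case
  proof (cases "k = 0")
    case True
    then have "A = {{#}}" unfolding A_def by auto
    then show ?thesis unfolding A_def[symmetric] using True by (simp add: FF_def)
  next
    case False
    show ?thesis
    proof (cases "N < k")
      case True
      have "M \<notin> A" for M
      proof
        assume "M \<in> A"
        then have "is_partition M" "size M = k" "psize M \<le> N" unfolding A_def by auto
        with size_le_psize[of M] True show False by simp
      qed
      then have "A = {}" by blast
      then show ?thesis unfolding A_def[symmetric] using FF_nonneg[OF assms] by simp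
    next
      case False
      with \<open>k \<noteq> 0\<close> have k1: "1 \<le> k" and Nk: "N - k < N" by auto
      define B where "B = {M. is_partition M \<and> size M \<le> k \<and> psize M \<le> N - k}"
      have fB: "finite B" unfolding B_def by (rule finite_subset[OF _ finite_bounded[of "N - k"]]) auto
      define g where "g M = u ^ k / (q ^ (k^2) * pq q 1 (k - size M)) * wt q u M" for M
      have gnn: "g M \<ge> 0" for M
      proof -
        have "0 < q ^ (k^2) * pq q 1 (k - size M)" using pq1_pos[OF assms(1)] assms by simp
        moreover have "0 \<le> u ^ k" using assms by simp
        ultimately have "0 \<le> u ^ k / (q ^ (k^2) * pq q 1 (k - size M))" by simp
        then show ?thesis unfolding g_def using wt_nonneg[OF assms(1,2), of M] by (rule mult_nonneg_nonneg)
      qed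
      have inj: "inj_on dec A"
      proof (rule inj_on_inverseI[where g = "inc k"])
        fix M assume "M \<in> A"
        then have "is_partition M" "size M = k" unfolding A_def by auto
        then show "inc k (dec M) = M" using inc_dec[of M] by simp
      qed
      have sub: "dec ` A \<subseteq> B"
      proof
        fix D assume "D \<in> dec ` A"
        then obtain M where M: "M \<in> A" "D = dec M" by blast
        then have M2: "is_partition M" "size M = k" "psize M \<le> N" unfolding A_def by auto
        have "psize M = size M + psize (dec M)" by (rule psize_dec[OF M2(1)])
        then have "psize D \<le> N - k" using M2 M(2) by simp
        moreover have "size D \<le> k" using size_dec_le[of M] M2 M(2) by simp
        moreover have "is_partition D" using dec_partition M(2) by simp
        ultimately show "D \<in> B" unfolding B_def by simp
      qed
      have "sum (wt q u) A = sum (\<lambda>M. g (dec M)) A"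
        unfolding g_def using k1 by (intro sum.cong refl) (auto simp: A_def wt_rec)
      also have "\<dots> = sum g (dec ` A)" by (rule sum.reindex[OF inj, symmetric, unfolded o_def])
      also have "\<dots> \<le> sum g B" by (rule sum_mono2[OF fB sub]) (use gnn in auto)
      also have "\<dots> = (\<Sum>j\<le>k. sum g {M. M \<in> B \<and> size M = j})"
        by (rule sum.group[symmetric]) (use fB in \<open>auto simp: B_def\<close>)
      also have "\<dots> = (\<Sum>j\<le>k. u ^ k / (q ^ (k^2) * pq q 1 (k - j)) *
                     sum (wt q u) {M. is_partition M \<and> size M = j \<and> psize M \<le> N - k})"
        unfolding sum_distrib_left g_def
        by (intro sum.cong refl) (auto simp: B_def intro!: sum.cong)
      also have "\<dots> \<le> (\<Sum>j\<le>k. u ^ k / (q ^ (k^2) * pq q 1 (k - j)) * FF q u j)"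
        using less.IH[OF Nk] pq1_pos[OF assms(1)] assms
        by (intro sum_mono mult_left_mono divide_nonneg_pos mult_pos_pos) auto
      also have "\<dots> = u ^ k / q ^ (k^2) * hK q u k"
        unfolding hK_def sum_distrib_left by (intro sum.cong refl) (simp add: field_simps)
      also have "\<dots> = FF q u k" by (rule aK_hK[OF assms])
      finally show ?thesis unfolding A_def .
    qed
  qed
qed



definition Lk :: "nat \<Rightarrow> nat multiset set" where
  "Lk k = {M. is_partition M \<and> size M = k}"

lemma has_sum_cong_imp:
  assumes "(f has_sum s) A" "\<And>x. x \<in> A \<Longrightarrow> f x = g x"
  shows "(g has_sum s) A"
proof -
  have "(f has_sum s) A = (g has_sum s) A" by (rule has_sum_cong) (rule assms(2))
  then show ?thesis using assms(1) by simp
qed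

lemma wt_summable:
  assumes "q > 1" "0 \<le> u" "u \<le> 1"
  shows "wt q u summable_on Lk k"
proof (rule nonneg_bdd_above_summable_on)
  show "\<And>x. x \<in> Lk k \<Longrightarrow> 0 \<le> wt q u x" using wt_nonneg assms by auto
  show "bdd_above (sum (wt q u) ` {F. F \<subseteq> Lk k \<and> finite F})"
  proof (rule bdd_aboveI2)
    fix F assume F: "F \<in> {F. F \<subseteq> Lk k \<and> finite F}"
    define N where "N = (\<Sum>M\<in>F. psize M)"
    have sub: "F \<subseteq> {M. is_partition M \<and> size M = k \<and> psize M \<le> N}"
      using F unfolding N_def Lk_def by (auto intro: member_le_sum)
    have fin: "finite {M. is_partition M \<and> size M = k \<and> psize M \<le> N}"
      by (rule finite_subset[OF _ finite_bounded[of N]]) auto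
    have "sum (wt q u) F \<le> sum (wt q u) {M. is_partition M \<and> size M = k \<and> psize M \<le> N}"
      by (rule sum_mono2[OF fin sub]) (use wt_nonneg assms in auto)
    also have "\<dots> \<le> FF q u k" by (rule bound[OF assms])
    finally show "sum (wt q u) F \<le> FF q u k" .
  qed
qed

lemma aK_lt1: fixes q u :: real assumes "q > 1" "0 \<le> u" "u \<le> 1" "1 \<le> k" shows "u ^ k / q ^ (k^2) < 1"
proof -
  have "u ^ k \<le> 1" using assms by (intro power_le_one) auto
  moreover have "1 < q ^ (k^2)" using assms by (intro one_less_power) (auto simp: power2_eq_square)
  ultimately show ?thesis by (simp add: divide_less_eq)
qed

lemma perk:
  assumes "q > 1" "0 \<le> u" "u \<le> 1"
  shows "(wt q u has_sum FF q u k) (Lk k)"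
proof (induction k rule: less_induct)
  case (less k)
  show ?case
  proof (cases "k = 0")
    case True
    then have "Lk k = {{#}}" unfolding Lk_def by auto
    moreover have "FF q u k = 1" using True by (simp add: FF_def)
    moreover have "(wt q u has_sum 1) {{#}}" by (rule has_sum_finiteI) simp_all
    ultimately show ?thesis by simp
  next
    case False
    then have k1: "1 \<le> k" by simp
    define a where "a = u ^ k / q ^ (k^2)"
    define g where "g M = u ^ k / (q ^ (k^2) * pq q 1 (k - size M)) * wt q u M" for M
    define X where "X = infsum (wt q u) (Lk k)"
    have hX: "(wt q u has_sum X) (Lk k)" unfolding X_def using wt_summable[OF assms] by simp
    define Bk where "Bk = {M. is_partition M \<and> size M \<le> k}"
    have "(wt q u has_sum X) (Lk k) = (g has_sum X) Bk"
    proof (rule has_sum_reindex_bij_witness[where i = "inc k" and j = dec])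
      show "\<And>M. M \<in> Lk k \<Longrightarrow> inc k (dec M) = M" unfolding Lk_def using inc_dec by blast
      show "\<And>M. M \<in> Lk k \<Longrightarrow> dec M \<in> Bk" using size_dec_le dec_partition by (auto simp: Lk_def Bk_def)
      show "\<And>N. N \<in> Bk \<Longrightarrow> dec (inc k N) = N" unfolding Bk_def using dec_inc by blast
      show "\<And>N. N \<in> Bk \<Longrightarrow> inc k N \<in> Lk k" unfolding Bk_def Lk_def using size_inc inc_partition by blast
      show "g (dec M) = wt q u M" if "M \<in> Lk k" for M
        using wt_rec[of M k q u] that k1 unfolding Lk_def g_def by simp
    qed simp
    with hX have hg: "(g has_sum X) Bk" by simp
    have hk: "(g has_sum (a * X)) (Lk k)"
    proof -
      have "((\<lambda>M. a * wt q u M) has_sum (a * X)) (Lk k)" by (rule has_sum_cmult_right[OF hX])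
      moreover have "\<And>M. M \<in> Lk k \<Longrightarrow> a * wt q u M = g M" by (simp add: Lk_def a_def g_def)
      ultimately show ?thesis by (rule has_sum_cong_imp)
    qed
    define R where "R = (\<Sum>j<k. u ^ k / (q ^ (k^2) * pq q 1 (k - j)) * FF q u j)"
    have hR: "(g has_sum R) (\<Union>j\<in>{..<k}. Lk j)"
      unfolding R_def
    proof (rule sum_has_sum)
      fix j assume j: "j \<in> {..<k}"
      have "((\<lambda>M. u ^ k / (q ^ (k^2) * pq q 1 (k - j)) * wt q u M) has_sum
             (u ^ k / (q ^ (k^2) * pq q 1 (k - j)) * FF q u j)) (Lk j)"
        using j by (intro has_sum_cmult_right less.IH) auto
      moreover have "\<And>M. M \<in> Lk j \<Longrightarrow> u ^ k / (q ^ (k^2) * pq q 1 (k - j)) * wt q u M = g M"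
        by (simp add: Lk_def g_def)
      ultimately show "(g has_sum (u ^ k / (q ^ (k^2) * pq q 1 (k - j)) * FF q u j)) (Lk j)"
        by (rule has_sum_cong_imp)
    qed (auto simp: Lk_def)
    have "(g has_sum (a * X + R)) (Lk k \<union> (\<Union>j\<in>{..<k}. Lk j))"
      by (rule has_sum_Un_disjoint[OF hk hR]) (auto simp: Lk_def)
    moreover have "Lk k \<union> (\<Union>j\<in>{..<k}. Lk j) = Bk" by (auto simp: Lk_def Bk_def)
    ultimately have eqX: "X = a * X + R" using hg has_sum_unique by blast
    have "FF q u k = a * hK q u k" unfolding a_def by (rule aK_hK[OF assms, symmetric])
    also have "\<dots> = a * FF q u k + R"
    proof -
      have "hK q u k = FF q u k + (\<Sum>j<k. FF q u j / pq q 1 (k - j))"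
        unfolding hK_def lessThan_Suc_atMost[symmetric] sum.lessThan_Suc by simp
      moreover have "a * (\<Sum>j<k. FF q u j / pq q 1 (k - j)) = R"
        unfolding R_def a_def sum_distrib_left by (intro sum.cong refl) simp
      ultimately show ?thesis by (simp add: distrib_left)
    qed
    finally have eqF: "FF q u k = a * FF q u k + R" .
    have "a < 1" unfolding a_def by (rule aK_lt1[OF assms k1])
    have "X * (1 - a) = R" using eqX by (simp add: algebra_simps)
    moreover have "FF q u k * (1 - a) = R" using eqF by (simp add: algebra_simps)
    ultimately have "X * (1 - a) = FF q u k * (1 - a)" by simp
    moreover have "1 - a \<noteq> 0" using \<open>a < 1\<close> by simp
    ultimately have "X = FF q u k" by simp
    then show ?thesis using hX by simp
  qed
qed



theorem lemma3p1:
  fixes u q :: real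
  assumes "q > 1" and "0 < u" and "u < 1"
  shows "(\<forall>lam. is_partition lam \<and> psize lam > 0 \<longrightarrow> N_uq u q lam \<ge> 0) \<and>
         (N_uq u q has_sum 1) {lam. is_partition lam \<and> psize lam > 0}"
proof -
  have a1: "q > 1" "0 \<le> u" "u \<le> 1" using assms by auto
  define C where "C = Cq q u"
  have C: "C > 0" unfolding C_def by (rule Cq_pos[OF a1])
  have Nform: "N_uq u q M = C / u * (q ^ size M - 1) * wt q u M"
    if M: "is_partition M" "psize M > 0" for M
  proof -
    have "u ^ (psize M - 1) = u ^ psize M / u" using M assms
      by (metis Suc_diff_1 nonzero_mult_div_cancel_left power_Suc less_irrefl)
    then show ?thesis
      unfolding N_uq_def C_def Cq_def wt_def Dq_def fac_def conj_1[OF M(1)]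
      by (simp add: field_simps)
  qed
  have nn: "N_uq u q M \<ge> 0" if M: "is_partition M" "psize M > 0" for M
  proof -
    have "q ^ size M \<ge> 1" using assms by (intro one_le_power) auto
    then show ?thesis unfolding Nform[OF M]
      using C assms wt_nonneg[OF a1(1,2), of M] by (intro mult_nonneg_nonneg divide_nonneg_pos) auto
  qed
  define B where "B k = {M. is_partition M \<and> psize M > 0 \<and> size M = k}" for k
  define G where "G k = C / u * (q ^ k - 1) * FF q u k" for k
  have hB: "(N_uq u q has_sum G k) (B k)" for k
  proof (cases "k = 0")
    case True
    then have "B k = {}" unfolding B_def by auto
    then show ?thesis using True by (simp add: G_def)
  next
    case False
    have BL: "B k = Lk k" unfolding B_def Lk_def using False size_le_psize by fastforce
    have "((\<lambda>M. C / u * (q ^ k - 1) * wt q u M) has_sum G k) (Lk k)"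
      unfolding G_def by (intro has_sum_cmult_right perk[OF a1])
    moreover have "\<And>M. M \<in> Lk k \<Longrightarrow> C / u * (q ^ k - 1) * wt q u M = N_uq u q M"
      using Nform size_le_psize False by (fastforce simp: Lk_def)
    ultimately show ?thesis unfolding BL by (rule has_sum_cong_imp)
  qed
  have Gsum: "(G has_sum 1) UNIV"
  proof (rule sums_nonneg_imp_has_sum)
    have "(\<lambda>k. C / u * (FF q u k * (q ^ k - 1))) sums (C / u * (u * (1 / Cq q u)))"
      by (intro sums_mult gg_sums[OF assms(1) a1(2) assms(3)])
    moreover have "C / u * (u * (1 / Cq q u)) = 1" using C assms unfolding C_def by simp
    ultimately show "G sums 1" unfolding G_def by (simp add: mult_ac)
    show "\<And>n. 0 \<le> G n" unfolding G_def
      using C assms FF_nonneg[OF a1] one_le_power[of q] by (intro mult_nonneg_nonneg divide_nonneg_pos) auto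
  qed
  have disj: "disjoint_family_on B UNIV" unfolding disjoint_family_on_def B_def by auto
  have U: "(\<Union>k\<in>UNIV. B k) = {lam. is_partition lam \<and> psize lam > 0}" unfolding B_def by auto
  have summ: "N_uq u q summable_on (\<Union>k\<in>UNIV. B k)"
    by (rule summable_on_UnionI[OF hB has_sum_imp_summable[OF Gsum] _ disj])
       (use nn in \<open>auto simp: B_def\<close>)
  define S where "S = infsum (N_uq u q) (\<Union>k\<in>UNIV. B k)"
  have hS: "(N_uq u q has_sum S) (\<Union>k\<in>UNIV. B k)" unfolding S_def using summ by simp
  have inj: "inj_on snd (Sigma UNIV B)"
    unfolding inj_on_def B_def by auto
  have "snd ` Sigma UNIV B = (\<Union>k\<in>UNIV. B k)"
  proof
    show "snd ` Sigma UNIV B \<subseteq> (\<Union>k\<in>UNIV. B k)" by auto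
    show "(\<Union>k\<in>UNIV. B k) \<subseteq> snd ` Sigma UNIV B"
    proof
      fix x assume "x \<in> (\<Union>k\<in>UNIV. B k)"
      then obtain k where "x \<in> B k" by blast
      then have "(k, x) \<in> Sigma UNIV B" by simp
      then show "x \<in> snd ` Sigma UNIV B" by (rule rev_image_eqI) simp
    qed
  qed
  with hS have "(N_uq u q has_sum S) (snd ` Sigma UNIV B)" by simp
  moreover have "(N_uq u q has_sum S) (snd ` Sigma UNIV B) \<longleftrightarrow> ((N_uq u q \<circ> snd) has_sum S) (Sigma UNIV B)"
    by (rule has_sum_reindex[OF inj])
  ultimately have "((N_uq u q \<circ> snd) has_sum S) (Sigma UNIV B)" by simp
  then have "(G has_sum S) UNIV" by (rule has_sum_SigmaD) (use hB in simp)
  then have "S = 1" using Gsum by (rule has_sum_unique)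
  then have "(N_uq u q has_sum 1) {lam. is_partition lam \<and> psize lam > 0}" using hS U by simp
  then show ?thesis using nn by simp
qed

end
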